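(* Let $\mathcal Q$ be a quadrangle in $K^2$. The bisector locus of $\mathcal Q$ is the conic through the three diagonal points and the six midpoints of $\mathcal Q$ (diagonal points at infinity being understood as points at infinity of the conic), and hence is the nine-point conic of $\mathcal Q$.
   Context: $K$ is a field of characteristic $\neq 2$; we work in $K^2$ inside the projective plane. A quadrangle $\mathcal Q$ consists of four distinct points of $K^2$ (its vertices) and the six lines through pairs of them (its sides); two sides are opposite if they have no common vertex, giving three pairs of opposite sides. The diagonal points of $\mathcal Q$ are the three intersection points (possibly at infinity) of pairs of opposite sides; the midpoints of $\mathcal Q$ are the six midpoints of pairs of vertices. The nine-point conic of $\mathcal Q$ is the unique conic passing through these nine points. A line $\ell$ crosses a pair of lines $\{\ell_1,\ell_2\}$ if it is distinct from both and not parallel to both; $\mathrm{mid}_{\{\ell_1,\ell_2\}}(\ell)$ is the midpoint of the points where $\ell$ meets $\ell_1,\ell_2$ (or the point at infinity of $\ell$ if one of these is at infinity). A line $\ell$ bisects $\mathcal Q$ if $\mathrm{mid}_{\mathsf P}(\ell)$ is the same for all pairs $\mathsf P$ of opposite sides of $\mathcal Q$ that $\ell$ crosses; this common point is the midpoint of the bisector. The bisector locus of $\mathcal Q$ is the set of midpoints of the bisectors of $\mathcal Q$. *)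

theory Defs
  imports Main
begin

(* Affine points of K^2 and homogeneous coordinates of the projective plane over K.
   The field K is a type 'a :: field; characteristic \<noteq> 2 is the hypothesis 2 \<noteq> 0. *)
type_synonym 'a pt = "'a \<times> 'a"
type_synonym 'a hpt = "'a \<times> 'a \<times> 'a"

definition hom :: "'a::field pt \<Rightarrow> 'a hpt" where
  "hom p = (fst p, snd p, 1)"

definition hscale :: "'a::field \<Rightarrow> 'a hpt \<Rightarrow> 'a hpt" where
  "hscale k X = (case X of (x, y, z) \<Rightarrow> (k * x, k * y, k * z))"

definition proj_eq :: "'a::field hpt \<Rightarrow> 'a hpt \<Rightarrow> bool" where
  "proj_eq X Y \<longleftrightarrow> X \<noteq> (0, 0, 0) \<and> (\<exists>k. k \<noteq> 0 \<and> Y = hscale k X)"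

definition midpt :: "'a::field pt \<Rightarrow> 'a pt \<Rightarrow> 'a pt" where
  "midpt p q = ((fst p + fst q) / 2, (snd p + snd q) / 2)"

definition is_line :: "'a::field pt set \<Rightarrow> bool" where
  "is_line L \<longleftrightarrow> (\<exists>a b c. (a \<noteq> 0 \<or> b \<noteq> 0) \<and> L = {(x, y). a * x + b * y = c})"

definition line_through :: "'a::field pt \<Rightarrow> 'a pt \<Rightarrow> 'a pt set" where
  "line_through p q = {(fst p + t * (fst q - fst p), snd p + t * (snd q - snd p)) | t. True}"

definition collinear3 :: "'a::field pt \<Rightarrow> 'a pt \<Rightarrow> 'a pt \<Rightarrow> bool" where
  "collinear3 p q r \<longleftrightarrow> (\<exists>L. is_line L \<and> p \<in> L \<and> q \<in> L \<and> r \<in> L)"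

definition quadrangle :: "'a::field pt \<Rightarrow> 'a pt \<Rightarrow> 'a pt \<Rightarrow> 'a pt \<Rightarrow> bool" where
  "quadrangle A B C D \<longleftrightarrow> distinct [A, B, C, D] \<and>
     \<not> collinear3 A B C \<and> \<not> collinear3 A B D \<and> \<not> collinear3 A C D \<and> \<not> collinear3 B C D"

definition parallel :: "'a::field pt set \<Rightarrow> 'a pt set \<Rightarrow> bool" where
  "parallel L M \<longleftrightarrow> L = M \<or> L \<inter> M = {}"

definition inf_pt :: "'a::field pt set \<Rightarrow> 'a hpt" where
  "inf_pt L = (SOME X. \<exists>p q. p \<in> L \<and> q \<in> L \<and> p \<noteq> q \<and> X = (fst q - fst p, snd q - snd p, 0))"

definition meet_pt :: "'a::field pt set \<Rightarrow> 'a pt set \<Rightarrow> 'a pt" where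
  "meet_pt L M = (THE p. p \<in> L \<inter> M)"

definition meet :: "'a::field pt set \<Rightarrow> 'a pt set \<Rightarrow> 'a hpt" where
  "meet L M = (if L \<inter> M = {} then inf_pt L else hom (meet_pt L M))"

definition crosses :: "'a::field pt set \<Rightarrow> 'a pt set \<times> 'a pt set \<Rightarrow> bool" where
  "crosses l P \<longleftrightarrow> l \<noteq> fst P \<and> l \<noteq> snd P \<and> \<not> (parallel l (fst P) \<and> parallel l (snd P))"

definition mid_of :: "'a::field pt set \<Rightarrow> 'a pt set \<times> 'a pt set \<Rightarrow> 'a hpt" where
  "mid_of l P = (if l \<inter> fst P \<noteq> {} \<and> l \<inter> snd P \<noteq> {}
                 then hom (midpt (meet_pt l (fst P)) (meet_pt l (snd P)))
                 else inf_pt l)"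

definition opp_pairs :: "'a::field pt \<Rightarrow> 'a pt \<Rightarrow> 'a pt \<Rightarrow> 'a pt \<Rightarrow> ('a pt set \<times> 'a pt set) set" where
  "opp_pairs A B C D = {(line_through A B, line_through C D),
                        (line_through A C, line_through B D),
                        (line_through A D, line_through B C)}"

definition bisects :: "'a::field pt \<Rightarrow> 'a pt \<Rightarrow> 'a pt \<Rightarrow> 'a pt \<Rightarrow> 'a pt set \<Rightarrow> bool" where
  "bisects A B C D l \<longleftrightarrow> is_line l \<and>
     (\<forall>P \<in> opp_pairs A B C D. \<forall>P' \<in> opp_pairs A B C D.
        crosses l P \<and> crosses l P' \<longrightarrow> proj_eq (mid_of l P) (mid_of l P'))"

definition bisector_locus :: "'a::field pt \<Rightarrow> 'a pt \<Rightarrow> 'a pt \<Rightarrow> 'a pt \<Rightarrow> 'a hpt set" where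
  "bisector_locus A B C D = {X. \<exists>l P. bisects A B C D l \<and> P \<in> opp_pairs A B C D \<and>
                                       crosses l P \<and> proj_eq (mid_of l P) X}"

definition diagonal_points :: "'a::field pt \<Rightarrow> 'a pt \<Rightarrow> 'a pt \<Rightarrow> 'a pt \<Rightarrow> 'a hpt set" where
  "diagonal_points A B C D = (\<lambda>P. meet (fst P) (snd P)) ` opp_pairs A B C D"

definition midpoints :: "'a::field pt \<Rightarrow> 'a pt \<Rightarrow> 'a pt \<Rightarrow> 'a pt \<Rightarrow> 'a hpt set" where
  "midpoints A B C D = hom ` {midpt A B, midpt A C, midpt A D, midpt B C, midpt B D, midpt C D}"

(* conics: coefficient vectors (a,b,c,d,e,f) of
   a x^2 + b y^2 + c z^2 + d x y + e x z + f y z, not all zero, up to scalar *)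
type_synonym 'a conic = "'a \<times> 'a \<times> 'a \<times> 'a \<times> 'a \<times> 'a"

definition qf :: "'a::field conic \<Rightarrow> 'a hpt \<Rightarrow> 'a" where
  "qf Q X = (case Q of (a, b, c, d, e, f) \<Rightarrow> case X of (x, y, z) \<Rightarrow>
     a * x^2 + b * y^2 + c * z^2 + d * x * y + e * x * z + f * y * z)"

definition cscale :: "'a::field \<Rightarrow> 'a conic \<Rightarrow> 'a conic" where
  "cscale k Q = (case Q of (a, b, c, d, e, f) \<Rightarrow> (k * a, k * b, k * c, k * d, k * e, k * f))"

definition passes_through :: "'a::field conic \<Rightarrow> 'a hpt set \<Rightarrow> bool" where
  "passes_through Q S \<longleftrightarrow> (\<forall>X \<in> S. qf Q X = 0)"

definition is_nine_point_conic :: "'a::field pt \<Rightarrow> 'a pt \<Rightarrow> 'a pt \<Rightarrow> 'a pt \<Rightarrow> 'a conic \<Rightarrow> bool" where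
  "is_nine_point_conic A B C D Q \<longleftrightarrow>
     Q \<noteq> (0, 0, 0, 0, 0, 0) \<and>
     passes_through Q (diagonal_points A B C D \<union> midpoints A B C D) \<and>
     (\<forall>Q'. Q' \<noteq> (0, 0, 0, 0, 0, 0) \<and>
            passes_through Q' (diagonal_points A B C D \<union> midpoints A B C D)
            \<longrightarrow> (\<exists>k. Q' = cscale k Q))"

end

theory Submission
  imports Defs
begin


definition crs :: "'a::field pt \<Rightarrow> 'a pt \<Rightarrow> 'a" where "crs u v = fst u * snd v - snd u * fst v"
definition dif :: "'a::field pt \<Rightarrow> 'a pt \<Rightarrow> 'a pt" where "dif Y X = (fst Y - fst X, snd Y - snd X)"
definition Dp :: "'a::field pt \<Rightarrow> 'a pt \<Rightarrow> 'a pt \<Rightarrow> 'a pt \<Rightarrow> 'a pt \<Rightarrow> 'a pt \<Rightarrow> 'a" where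
  "Dp M v X Y Z W = crs (dif Y X) (dif M X) * crs (dif W Z) v + crs (dif W Z) (dif M Z) * crs (dif Y X) v"
definition lf :: "'a::field pt \<Rightarrow> 'a pt \<Rightarrow> 'a hpt" where
  "lf X Y = (-(snd Y - snd X), fst Y - fst X, (snd Y - snd X)*fst X - (fst Y - fst X)*snd X)"
definition lin :: "'a::field hpt \<Rightarrow> 'a hpt \<Rightarrow> 'a" where
  "lin F Z = fst F * fst Z + fst (snd F) * fst (snd Z) + snd (snd F) * snd (snd Z)"
definition cprod :: "'a::field hpt \<Rightarrow> 'a hpt \<Rightarrow> 'a conic" where
  "cprod F G = (case F of (f1,f2,f3) \<Rightarrow> case G of (g1,g2,g3) \<Rightarrow>
     (f1*g1, f2*g2, f3*g3, f1*g2+f2*g1, f1*g3+f3*g1, f2*g3+f3*g2))"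
definition cadd :: "'a::field conic \<Rightarrow> 'a conic \<Rightarrow> 'a conic" where
  "cadd P R = (case P of (a,b,c,d,e,f) \<Rightarrow> case R of (a',b',c',d',e',f') \<Rightarrow>
     (a+a',b+b',c+c',d+d',e+e',f+f'))"
definition Gh :: "'a::field hpt \<Rightarrow> 'a pt \<Rightarrow> 'a pt \<Rightarrow> 'a pt \<Rightarrow> 'a pt \<Rightarrow> 'a pt" where
  "Gh Z X Y U W = (lin (lf X Y) Z * - snd (dif W U) + lin (lf U W) Z * - snd (dif Y X),
                   lin (lf X Y) Z * fst (dif W U) + lin (lf U W) Z * fst (dif Y X))"
definition QQ :: "'a::field pt \<Rightarrow> 'a pt \<Rightarrow> 'a pt \<Rightarrow> 'a pt \<Rightarrow> 'a conic" where
  "QQ A B C D = cadd (cadd (cscale (crs (dif D C) (dif D B)) (cprod (lf A B) (lf A C)))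
                           (cscale (crs (dif D C) (dif C A)) (cprod (lf A B) (lf B D))))
                     (cadd (cscale (crs (dif B A) (dif D B)) (cprod (lf C D) (lf A C)))
                           (cscale (crs (dif B A) (dif C A)) (cprod (lf C D) (lf B D))))"

lemma qf_cprod: "qf (cprod F G) Z = lin F Z * lin G Z"
  by (cases F; cases G; cases Z) (simp add: qf_def cprod_def lin_def power2_eq_square algebra_simps)
lemma qf_cadd: "qf (cadd P R) Z = qf P Z + qf R Z"
  by (cases P; cases R; cases Z) (simp add: qf_def cadd_def algebra_simps)
lemma qf_cscale: "qf (cscale k P) Z = k * qf P Z"
  by (cases P; cases Z) (simp add: qf_def cscale_def algebra_simps)

lemma plucker: "Dp M v A B C D - Dp M v A C B D + Dp M v A D B C = 0"
  apply (cases M; cases v; cases A; cases B; cases C; cases D)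
  apply (simp add: Dp_def crs_def dif_def)
  apply (simp add: algebra_simps)
  done

lemma Dp_Gh: "Dp M v X Y U W = fst (Gh (hom M) X Y U W) * fst v + snd (Gh (hom M) X Y U W) * snd v"
  unfolding Dp_def Gh_def crs_def dif_def lin_def lf_def hom_def
  by simp algebra

lemma QQ_G: "qf (QQ A B C D) Z = crs (Gh Z A B C D) (Gh Z A C B D)"
  unfolding QQ_def qf_cadd qf_cscale qf_cprod Gh_def crs_def dif_def lin_def lf_def
  by simp algebra

lemma QQ_G3: "qf (QQ A B C D) Z = crs (Gh Z A B C D) (Gh Z A D B C)"
  unfolding QQ_def qf_cadd qf_cscale qf_cprod Gh_def crs_def dif_def lin_def lf_def
  by simp algebra




lemma QQ_mAB: "qf (QQ (m1 - h1, m2 - h2) (m1 + h1, m2 + h2) C D) (m1, m2, 1) = 0"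
  unfolding QQ_G Gh_def crs_def dif_def lin_def lf_def by simp algebra
lemma QQ_mAC: "qf (QQ (m1 - h1, m2 - h2) B (m1 + h1, m2 + h2) D) (m1, m2, 1) = 0"
  unfolding QQ_G Gh_def crs_def dif_def lin_def lf_def by simp algebra
lemma QQ_mAD: "qf (QQ (m1 - h1, m2 - h2) B C (m1 + h1, m2 + h2)) (m1, m2, 1) = 0"
  unfolding QQ_G3 Gh_def crs_def dif_def lin_def lf_def by simp algebra
lemma QQ_mBC: "qf (QQ A (m1 - h1, m2 - h2) (m1 + h1, m2 + h2) D) (m1, m2, 1) = 0"
  unfolding QQ_G3 Gh_def crs_def dif_def lin_def lf_def by simp algebra
lemma QQ_mBD: "qf (QQ A (m1 - h1, m2 - h2) C (m1 + h1, m2 + h2)) (m1, m2, 1) = 0"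
  unfolding QQ_G Gh_def crs_def dif_def lin_def lf_def by simp algebra
lemma QQ_mCD: "qf (QQ A B (m1 - h1, m2 - h2) (m1 + h1, m2 + h2)) (m1, m2, 1) = 0"
  unfolding QQ_G Gh_def crs_def dif_def lin_def lf_def by simp algebra


lemma four_ne: assumes "(2::'a::field) \<noteq> 0" shows "(4::'a) \<noteq> 0"
proof -
  have "(4::'a) = 2 * 2" by simp
  then show ?thesis using assms by (metis no_zero_divisors)
qed

lemma mid_form:
  fixes X Y :: "'a::field pt"
  assumes two: "(2::'a) \<noteq> 0"
  obtains m1 m2 h1 h2 where "X = (m1-h1, m2-h2)" "Y = (m1+h1, m2+h2)" "hom (midpt X Y) = (m1,m2,1)"
proof -
  let ?m1 = "(fst X + fst Y)/2" and ?m2 = "(snd X + snd Y)/2"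
  let ?h1 = "(fst Y - fst X)/2" and ?h2 = "(snd Y - snd X)/2"
  note f4 = four_ne[OF two]
  have "X = (?m1 - ?h1, ?m2 - ?h2)" using two f4 by (simp add: prod_eq_iff field_simps)
  moreover have "Y = (?m1 + ?h1, ?m2 + ?h2)" using two f4 by (simp add: prod_eq_iff field_simps)
  moreover have "hom (midpt X Y) = (?m1, ?m2, 1)" by (simp add: hom_def midpt_def)
  ultimately show ?thesis using that by blast
qed

lemma QQ_mids:
  assumes two: "(2::'a::field) \<noteq> 0"
  shows "qf (QQ A B C D) (hom (midpt A B)) = (0::'a)" "qf (QQ A B C D) (hom (midpt A C)) = 0"
    "qf (QQ A B C D) (hom (midpt A D)) = 0" "qf (QQ A B C D) (hom (midpt B C)) = 0"
    "qf (QQ A B C D) (hom (midpt B D)) = 0" "qf (QQ A B C D) (hom (midpt C D)) = 0"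
proof -
  show "qf (QQ A B C D) (hom (midpt A B)) = 0"
    by (rule mid_form[OF two, of A B]) (simp add: QQ_mAB)
  show "qf (QQ A B C D) (hom (midpt A C)) = 0"
    by (rule mid_form[OF two, of A C]) (simp add: QQ_mAC)
  show "qf (QQ A B C D) (hom (midpt A D)) = 0"
    by (rule mid_form[OF two, of A D]) (simp add: QQ_mAD)
  show "qf (QQ A B C D) (hom (midpt B C)) = 0"
    by (rule mid_form[OF two, of B C]) (simp add: QQ_mBC)
  show "qf (QQ A B C D) (hom (midpt B D)) = 0"
    by (rule mid_form[OF two, of B D]) (simp add: QQ_mBD)
  show "qf (QQ A B C D) (hom (midpt C D)) = 0"
    by (rule mid_form[OF two, of C D]) (simp add: QQ_mCD)
qed



definition ptat :: "'a::field pt \<Rightarrow> 'a pt \<Rightarrow> 'a \<Rightarrow> 'a pt" where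
  "ptat M v t = (fst M + t * fst v, snd M + t * snd v)"
definition pl :: "'a::field pt \<Rightarrow> 'a pt \<Rightarrow> 'a pt set" where
  "pl M v = range (ptat M v)"

lemma line_through_pl: "line_through X Y = pl X (dif Y X)"
  by (auto simp: line_through_def pl_def ptat_def dif_def)

lemma f_ptat: "crs u (dif (ptat M v t) X) = crs u (dif M X) + t * crs u v"
  by (simp add: crs_def dif_def ptat_def algebra_simps)

lemma cr0:
  fixes a b v :: "'a::field pt"
  assumes "crs a v = 0" "crs b v = 0" "v \<noteq> (0,0)"
  shows "crs a b = 0"
proof -
  have e1: "fst a * snd v = snd a * fst v" and e2: "fst b * snd v = snd b * fst v"
    using assms by (auto simp: crs_def)
  have "crs a b * fst v = 0"
    unfolding crs_def using e1 e2 by algebra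
  moreover have "crs a b * snd v = 0"
    unfolding crs_def using e1 e2 by algebra
  moreover have "fst v \<noteq> 0 \<or> snd v \<noteq> 0" using assms(3) by (auto simp: prod_eq_iff)
  ultimately show ?thesis by auto
qed

lemma colin_vec:
  fixes a v :: "'a::field pt"
  assumes "crs a v = 0" "v \<noteq> (0,0)"
  shows "\<exists>t. a = (t * fst v, t * snd v)"
proof (cases "fst v = 0")
  case True
  then have "snd v \<noteq> 0" using assms(2) by (metis prod.collapse)
  moreover have "fst a * snd v = 0" using assms(1) True by (simp add: crs_def)
  ultimately have "fst a = 0" by simp
  show ?thesis
    by (rule exI[of _ "snd a / snd v"]) (simp add: prod_eq_iff True \<open>fst a = 0\<close> \<open>snd v \<noteq> 0\<close>)
next
  case False
  have "fst a * snd v = snd a * fst v" using assms(1) by (simp add: crs_def)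
  then have "snd a = fst a / fst v * snd v" using False by (simp add: field_simps)
  then show ?thesis
    by (intro exI[of _ "fst a / fst v"]) (simp add: prod_eq_iff False)
qed

lemma dif_ne: "X \<noteq> Y \<Longrightarrow> dif Y X \<noteq> (0,0)"
  by (auto simp: dif_def prod_eq_iff)

lemma mem_line:
  assumes "X \<noteq> Y"
  shows "Z \<in> line_through X Y \<longleftrightarrow> crs (dif Y X) (dif Z X) = 0"
proof
  assume "Z \<in> line_through X Y"
  then obtain t where "Z = ptat X (dif Y X) t" by (auto simp: line_through_pl pl_def)
  then show "crs (dif Y X) (dif Z X) = 0" by (simp add: crs_def dif_def ptat_def algebra_simps)
next
  assume h: "crs (dif Y X) (dif Z X) = 0"
  have "crs (dif Z X) (dif Y X) = 0" using h by (simp add: crs_def algebra_simps)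
  then obtain t where "dif Z X = (t * fst (dif Y X), t * snd (dif Y X))"
    using colin_vec dif_ne[OF assms] by blast
  then have "Z = ptat X (dif Y X) t" by (simp add: dif_def ptat_def prod_eq_iff algebra_simps)
  then show "Z \<in> line_through X Y" by (auto simp: line_through_pl pl_def)
qed

lemma ptat_inj: "v \<noteq> (0,0) \<Longrightarrow> ptat M v s = ptat M v t \<Longrightarrow> s = t"
  by (auto simp: ptat_def prod_eq_iff)

lemma side_meet:
  assumes "X \<noteq> Y" "crs (dif Y X) v \<noteq> 0"
  shows "pl M v \<inter> line_through X Y = {ptat M v (- crs (dif Y X) (dif M X) / crs (dif Y X) v)}"
proof -
  have key: "crs (dif Y X) (dif M X) + t * crs (dif Y X) v = 0 \<longleftrightarrow>
      t = - crs (dif Y X) (dif M X) / crs (dif Y X) v" for t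
    using assms(2) by (auto simp: field_simps add_eq_0_iff2)
  show ?thesis using assms
    by (auto simp: pl_def mem_line f_ptat key)
qed

lemma side_empty:
  assumes "X \<noteq> Y" "crs (dif Y X) v = 0" "crs (dif Y X) (dif M X) \<noteq> 0"
  shows "pl M v \<inter> line_through X Y = {}"
  using assms by (auto simp: pl_def mem_line f_ptat)

lemma side_eq:
  assumes "X \<noteq> Y" "v \<noteq> (0,0)" "crs (dif Y X) v = 0" "crs (dif Y X) (dif M X) = 0"
  shows "pl M v = line_through X Y"
proof
  show "pl M v \<subseteq> line_through X Y" using assms by (auto simp: pl_def mem_line f_ptat)
next
  show "line_through X Y \<subseteq> pl M v"
  proof
    fix Z assume "Z \<in> line_through X Y"
    then have z: "crs (dif Y X) (dif Z X) = 0" using mem_line assms(1) by blast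
    have "crs (dif Y X) (dif Z M) = crs (dif Y X) (dif Z X) - crs (dif Y X) (dif M X)"
      by (simp add: crs_def dif_def algebra_simps)
    then have "crs (dif Y X) (dif Z M) = 0" using z assms(4) by simp
    then have a: "crs (dif Z M) (dif Y X) = 0" by (simp add: crs_def algebra_simps)
    have b: "crs v (dif Y X) = 0" using assms(3) by (simp add: crs_def algebra_simps)
    have "crs (dif Z M) v = 0" using cr0[OF a b dif_ne[OF assms(1)]] .
    then obtain t where "dif Z M = (t * fst v, t * snd v)" using colin_vec assms(2) by blast
    then have "Z = ptat M v t" by (simp add: dif_def ptat_def prod_eq_iff algebra_simps)
    then show "Z \<in> pl M v" by (auto simp: pl_def)
  qed
qed

lemma two_pts: "v \<noteq> (0,0) \<Longrightarrow> ptat M v 0 \<noteq> ptat M v 1"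
  by (cases v; cases M) (simp add: ptat_def)

lemma side_info:
  assumes XY: "X \<noteq> Y" and v: "v \<noteq> (0,0)"
  shows "pl M v = line_through X Y \<longleftrightarrow> crs (dif Y X) v = 0 \<and> crs (dif Y X) (dif M X) = 0"
    and "pl M v \<inter> line_through X Y = {} \<longleftrightarrow> crs (dif Y X) v = 0 \<and> crs (dif Y X) (dif M X) \<noteq> 0"
    and "parallel (pl M v) (line_through X Y) \<longleftrightarrow> crs (dif Y X) v = 0"
proof -
  have ne: "ptat M v 0 \<in> pl M v" by (auto simp: pl_def)
  have nsing: "pl M v \<noteq> {p}" for p
  proof
    assume "pl M v = {p}"
    then have "ptat M v 0 = p" "ptat M v 1 = p" by (auto simp: pl_def)
    then show False using two_pts[OF v, of M] by metis
  qed
  show A: "pl M v = line_through X Y \<longleftrightarrow> crs (dif Y X) v = 0 \<and> crs (dif Y X) (dif M X) = 0"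
  proof (cases "crs (dif Y X) v = 0")
    case True
    show ?thesis
    proof (cases "crs (dif Y X) (dif M X) = 0")
      case True2: True
      show ?thesis using side_eq[OF XY v True True2] True True2 by simp
    next
      case False2: False
      have "pl M v \<inter> line_through X Y = {}" using side_empty[OF XY True False2] .
      then have "pl M v \<noteq> line_through X Y" using ne by blast
      then show ?thesis using False2 by simp
    qed
  next
    case False
    have "pl M v \<inter> line_through X Y = {ptat M v (- crs (dif Y X) (dif M X) / crs (dif Y X) v)}"
      using side_meet[OF XY False] .
    then have "pl M v \<noteq> line_through X Y" using nsing by (metis Int_absorb)
    then show ?thesis using False by simp
  qed
  show B: "pl M v \<inter> line_through X Y = {} \<longleftrightarrow> crs (dif Y X) v = 0 \<and> crs (dif Y X) (dif M X) \<noteq> 0"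
  proof (cases "crs (dif Y X) v = 0")
    case True
    show ?thesis
    proof (cases "crs (dif Y X) (dif M X) = 0")
      case True2: True
      have "pl M v \<inter> line_through X Y \<noteq> {}" using side_eq[OF XY v True True2] ne by blast
      then show ?thesis using True2 by simp
    next
      case False2: False
      show ?thesis using side_empty[OF XY True False2] True False2 by simp
    qed
  next
    case False
    show ?thesis using side_meet[OF XY False, of M] False by simp
  qed
  show "parallel (pl M v) (line_through X Y) \<longleftrightarrow> crs (dif Y X) v = 0"
    unfolding parallel_def A B by blast
qed

lemma meet_pt_side:
  assumes "X \<noteq> Y" "crs (dif Y X) v \<noteq> 0"
  shows "meet_pt (pl M v) (line_through X Y) = ptat M v (- crs (dif Y X) (dif M X) / crs (dif Y X) v)"
  unfolding meet_pt_def side_meet[OF assms] by simp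

lemma inf_pt_pl:
  assumes "v \<noteq> (0,0)"
  shows "\<exists>s. inf_pt (pl M v) = (s * fst v, s * snd v, 0)"
proof -
  let ?P = "\<lambda>X. \<exists>p q. p \<in> pl M v \<and> q \<in> pl M v \<and> p \<noteq> q \<and> X = (fst q - fst p, snd q - snd p, 0)"
  have "?P (fst (ptat M v 1) - fst (ptat M v 0), snd (ptat M v 1) - snd (ptat M v 0), 0)"
    apply (rule exI[of _ "ptat M v 0"], rule exI[of _ "ptat M v 1"])
    using two_pts[OF assms, of M] by (auto simp: pl_def)
  then have "?P (inf_pt (pl M v))" unfolding inf_pt_def by (rule someI)
  then obtain s t where "inf_pt (pl M v) = (fst (ptat M v t) - fst (ptat M v s), snd (ptat M v t) - snd (ptat M v s), 0)"
    by (auto simp: pl_def)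
  then have "inf_pt (pl M v) = ((t - s) * fst v, (t - s) * snd v, 0)"
    by (simp add: ptat_def algebra_simps)
  then show ?thesis by blast
qed

lemma is_line_pl:
  assumes "v \<noteq> (0,0)" shows "is_line (pl M v)"
proof -
  let ?a = "- snd v" and ?b = "fst v" and ?c = "- snd v * fst M + fst v * snd M"
  have ab: "?a \<noteq> 0 \<or> ?b \<noteq> 0" using assms by (auto simp: prod_eq_iff)
  have "pl M v = {(x, y). ?a * x + ?b * y = ?c}"
  proof (intro set_eqI iffI)
    fix Z assume "Z \<in> pl M v"
    then show "Z \<in> {(x, y). ?a * x + ?b * y = ?c}" by (auto simp: pl_def ptat_def algebra_simps)
  next
    fix Z assume "Z \<in> {(x, y). ?a * x + ?b * y = ?c}"
    then have h: "crs (dif Z M) v = 0" by (cases Z) (simp add: crs_def dif_def algebra_simps)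
    then obtain t where "dif Z M = (t * fst v, t * snd v)" using colin_vec assms by blast
    then have "Z = ptat M v t" by (simp add: dif_def ptat_def prod_eq_iff algebra_simps)
    then show "Z \<in> pl M v" by (auto simp: pl_def)
  qed
  then show ?thesis unfolding is_line_def using ab by blast
qed

lemma is_line_ex:
  assumes "is_line l" shows "\<exists>M v. v \<noteq> (0,0) \<and> l = pl M v"
proof -
  obtain a b c where ab: "a \<noteq> 0 \<or> b \<noteq> 0" and l: "l = {(x, y). a * x + b * y = c}"
    using assms unfolding is_line_def by blast
  define v where "v = (-b, a)"
  define M where "M = (if a \<noteq> 0 then (c / a, 0) else (0, c / b))"
  have v: "v \<noteq> (0,0)" using ab by (auto simp: v_def)
  have "pl M v = {(x, y). a * x + b * y = c}"
  proof (intro set_eqI iffI)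
    fix Z assume "Z \<in> pl M v"
    then show "Z \<in> {(x, y). a * x + b * y = c}" using ab
      by (auto simp: pl_def ptat_def M_def v_def field_simps)
  next
    fix Z assume "Z \<in> {(x, y). a * x + b * y = c}"
    then have h: "crs (dif Z M) v = 0" using ab
      by (cases Z) (auto simp: crs_def dif_def M_def v_def field_simps)
    then obtain t where "dif Z M = (t * fst v, t * snd v)" using colin_vec v by blast
    then have "Z = ptat M v t" by (simp add: dif_def ptat_def prod_eq_iff algebra_simps)
    then show "Z \<in> pl M v" by (auto simp: pl_def)
  qed
  then show ?thesis using v l by blast
qed




lemma pair_crosses:
  assumes "X \<noteq> Y" "U \<noteq> W" "v \<noteq> (0,0)"
  shows "crosses (pl M v) (line_through X Y, line_through U W) \<longleftrightarrow>
    \<not> (crs (dif Y X) v = 0 \<and> crs (dif Y X) (dif M X) = 0) \<and>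
    \<not> (crs (dif W U) v = 0 \<and> crs (dif W U) (dif M U) = 0) \<and>
    \<not> (crs (dif Y X) v = 0 \<and> crs (dif W U) v = 0)"
  unfolding crosses_def using side_info[OF assms(1,3), of M] side_info[OF assms(2,3), of M] by simp

lemma midpt_ptat:
  assumes "(2::'a::field) \<noteq> 0"
  shows "midpt (ptat M v s) (ptat M v t) = ptat M v ((s + t) / (2::'a))"
  using assms by (simp add: midpt_def ptat_def field_simps)

lemma pair_good:
  fixes M v X Y U W :: "'a::field pt"
  assumes two: "(2::'a) \<noteq> 0" and XY: "X \<noteq> Y" and UW: "U \<noteq> W" and v: "v \<noteq> (0,0)"
    and l1: "crs (dif Y X) v \<noteq> 0" and l2: "crs (dif W U) v \<noteq> 0"
  defines "s \<equiv> - (crs (dif Y X) (dif M X) / crs (dif Y X) v + crs (dif W U) (dif M U) / crs (dif W U) v) / 2"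
  shows "mid_of (pl M v) (line_through X Y, line_through U W) = hom (ptat M v s)"
    and "Dp (ptat M v s) v X Y U W = 0"
proof -
  have n1: "pl M v \<inter> line_through X Y \<noteq> {}" using side_info(2)[OF XY v, of M] l1 by simp
  have n2: "pl M v \<inter> line_through U W \<noteq> {}" using side_info(2)[OF UW v, of M] l2 by simp
  show "mid_of (pl M v) (line_through X Y, line_through U W) = hom (ptat M v s)"
    unfolding mid_of_def using n1 n2
    by (simp add: meet_pt_side[OF XY l1] meet_pt_side[OF UW l2] midpt_ptat[OF two] s_def
        add_divide_distrib[symmetric] diff_divide_distrib)
  show "Dp (ptat M v s) v X Y U W = 0"
    unfolding Dp_def f_ptat s_def using l1 l2 two by (simp add: field_simps)
qed

lemma pair_bad:
  assumes XY: "X \<noteq> Y" and UW: "U \<noteq> W" and v: "v \<noteq> (0,0)"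
    and cr: "crosses (pl M v) (line_through X Y, line_through U W)"
    and bad: "\<not> (crs (dif Y X) v \<noteq> 0 \<and> crs (dif W U) v \<noteq> 0)"
  shows "snd (snd (mid_of (pl M v) (line_through X Y, line_through U W))) = 0"
proof -
  note c = cr[unfolded pair_crosses[OF XY UW v]]
  have "pl M v \<inter> line_through X Y = {} \<or> pl M v \<inter> line_through U W = {}"
    using bad c side_info(2)[OF XY v, of M] side_info(2)[OF UW v, of M] by auto
  then have "mid_of (pl M v) (line_through X Y, line_through U W) = inf_pt (pl M v)"
    unfolding mid_of_def by auto
  then show ?thesis using inf_pt_pl[OF v, of M] by auto
qed

lemma pair_D0:
  fixes M v X Y U W :: "'a::field pt"
  assumes two: "(2::'a) \<noteq> 0" and XY: "X \<noteq> Y" and UW: "U \<noteq> W" and v: "v \<noteq> (0,0)"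
    and cr: "crosses (pl M v) (line_through X Y, line_through U W)"
    and D: "Dp M v X Y U W = 0"
  shows "crs (dif Y X) v \<noteq> 0 \<and> crs (dif W U) v \<noteq> 0"
    and "mid_of (pl M v) (line_through X Y, line_through U W) = hom M"
proof -
  note c = cr[unfolded pair_crosses[OF XY UW v]]
  have D': "crs (dif Y X) (dif M X) * crs (dif W U) v + crs (dif W U) (dif M U) * crs (dif Y X) v = 0"
    using D by (simp add: Dp_def)
  show g: "crs (dif Y X) v \<noteq> 0 \<and> crs (dif W U) v \<noteq> 0"
  proof (rule ccontr)
    assume "\<not> ?thesis"
    then show False using c D' by auto
  qed
  have s0: "- (crs (dif Y X) (dif M X) / crs (dif Y X) v + crs (dif W U) (dif M U) / crs (dif W U) v) / 2 = 0"
  proof -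
    have "crs (dif Y X) (dif M X) / crs (dif Y X) v + crs (dif W U) (dif M U) / crs (dif W U) v
        = (crs (dif Y X) (dif M X) * crs (dif W U) v + crs (dif W U) (dif M U) * crs (dif Y X) v)
           / (crs (dif Y X) v * crs (dif W U) v)"
      using g by (simp add: field_simps)
    then show ?thesis using D' by simp
  qed
  have p0: "ptat M v 0 = M" by (simp add: ptat_def)
  have "mid_of (pl M v) (line_through X Y, line_through U W) = hom (ptat M v (- (crs (dif Y X) (dif M X) / crs (dif Y X) v + crs (dif W U) (dif M U) / crs (dif W U) v) / 2))"
    by (rule pair_good(1)[OF two XY UW v conjunct1[OF g] conjunct2[OF g]])
  then show "mid_of (pl M v) (line_through X Y, line_through U W) = hom M"
    by (simp only: s0 p0)
qed

lemma ncol: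
  assumes "X \<noteq> Y" "\<not> collinear3 X Y Z"
  shows "crs (dif Y X) (dif Z X) \<noteq> 0"
proof
  assume h: "crs (dif Y X) (dif Z X) = 0"
  let ?a = "- (snd Y - snd X)" and ?b = "fst Y - fst X"
  let ?L = "{(x, y). ?a * x + ?b * y = ?a * fst X + ?b * snd X}"
  have "is_line ?L" unfolding is_line_def
    apply (rule exI[of _ ?a], rule exI[of _ ?b], rule exI[of _ "?a * fst X + ?b * snd X"])
    using assms(1) by (auto simp: prod_eq_iff)
  moreover have "X \<in> ?L" by (cases X) simp
  moreover have "Y \<in> ?L" by (cases X; cases Y) (simp add: algebra_simps)
  moreover have "Z \<in> ?L" using h by (cases X; cases Y; cases Z) (simp add: crs_def dif_def algebra_simps)
  ultimately show False using assms(2) unfolding collinear3_def by blast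
qed

lemma dot0:
  fixes g1 g2 v :: "'a::field pt"
  assumes "fst g1 * fst v + snd g1 * snd v = 0" "fst g2 * fst v + snd g2 * snd v = 0" "v \<noteq> (0,0)"
  shows "crs g1 g2 = 0"
proof -
  have "crs g1 (- snd v, fst v) = 0" "crs g2 (- snd v, fst v) = 0" "(- snd v, fst v) \<noteq> (0,0)"
    using assms by (auto simp: crs_def prod_eq_iff algebra_simps)
  then show ?thesis by (rule cr0)
qed

lemma crs0_dot:
  fixes g1 g2 :: "'a::field pt"
  assumes "crs g1 g2 = 0"
  shows "\<exists>v. v \<noteq> (0,0) \<and> fst g1 * fst v + snd g1 * snd v = 0 \<and> fst g2 * fst v + snd g2 * snd v = 0"
proof (cases "g1 = (0,0)")
  case False
  show ?thesis
    by (rule exI[of _ "(- snd g1, fst g1)"]) (use False assms in \<open>auto simp: crs_def prod_eq_iff algebra_simps\<close>)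
next
  case g1: True
  show ?thesis
  proof (cases "g2 = (0,0)")
    case False
    show ?thesis
      by (rule exI[of _ "(- snd g2, fst g2)"]) (use False g1 in \<open>auto simp: crs_def prod_eq_iff algebra_simps\<close>)
  next
    case True
    show ?thesis by (rule exI[of _ "(1,0)"]) (use True g1 in auto)
  qed
qed

lemma lin_lf_hom: "lin (lf X Y) (hom Z) = crs (dif Y X) (dif Z X)"
  by (simp add: lin_def lf_def hom_def crs_def dif_def algebra_simps)

lemma diag:
  assumes XY: "X \<noteq> Y" and UW: "U \<noteq> W" and nc: "crs (dif W U) (dif X U) \<noteq> 0"
  shows "lin (lf X Y) (meet (line_through X Y) (line_through U W)) = 0 \<and>
         lin (lf U W) (meet (line_through X Y) (line_through U W)) = 0"
proof -
  let ?u = "dif Y X"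
  have u: "?u \<noteq> (0,0)" using dif_ne[OF XY] .
  have L1: "line_through X Y = pl X ?u" by (rule line_through_pl)
  show ?thesis
  proof (cases "crs (dif W U) ?u = 0")
    case False
    let ?t = "- crs (dif W U) (dif X U) / crs (dif W U) ?u"
    have I: "pl X ?u \<inter> line_through U W = {ptat X ?u ?t}" using side_meet[OF UW False] .
    have m: "meet (line_through X Y) (line_through U W) = hom (ptat X ?u ?t)"
      unfolding meet_def meet_pt_def L1 I by simp
    have a: "crs ?u (dif (ptat X ?u ?t) X) = 0"
      by (simp add: crs_def dif_def ptat_def algebra_simps)
    have b: "crs (dif W U) (dif (ptat X ?u ?t) U) = 0"
      unfolding f_ptat using False by simp
    show ?thesis unfolding m lin_lf_hom using a b by simp
  next
    case True
    have I: "pl X ?u \<inter> line_through U W = {}" using side_empty[OF UW True nc] .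
    obtain s where s: "inf_pt (pl X ?u) = (s * fst ?u, s * snd ?u, 0)" using inf_pt_pl[OF u] by blast
    have m: "meet (line_through X Y) (line_through U W) = (s * fst ?u, s * snd ?u, 0)"
      unfolding meet_def L1 I s by simp
    have "lin (lf U W) (s * fst ?u, s * snd ?u, 0) = s * crs (dif W U) ?u"
      by (simp add: lin_def lf_def crs_def dif_def algebra_simps)
    then show ?thesis unfolding m using True by (simp add: lin_def lf_def dif_def algebra_simps)
  qed
qed

lemma QQ_diag1: "lin (lf A B) Z = 0 \<Longrightarrow> lin (lf C D) Z = 0 \<Longrightarrow> qf (QQ A B C D) Z = 0"
  by (simp add: QQ_def qf_cadd qf_cscale qf_cprod)
lemma QQ_diag2: "lin (lf A C) Z = 0 \<Longrightarrow> lin (lf B D) Z = 0 \<Longrightarrow> qf (QQ A B C D) Z = 0"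
  by (simp add: QQ_def qf_cadd qf_cscale qf_cprod)
lemma QQ_diag3: "lin (lf A D) Z = 0 \<Longrightarrow> lin (lf B C) Z = 0 \<Longrightarrow> qf (QQ A B C D) Z = 0"
  by (simp add: QQ_G3 Gh_def crs_def)

lemma QQ_A: "qf (QQ A B C D) (hom A) = crs (dif B A) (dif C A) * (crs (dif D C) (dif A C) * crs (dif D B) (dif A B))"
  by (simp add: QQ_def qf_cadd qf_cscale qf_cprod lin_lf_hom crs_def dif_def)

lemma qf_hscale: "qf R (hscale k Z) = k^2 * qf R Z"
  by (cases R; cases Z) (simp add: qf_def hscale_def power2_eq_square algebra_simps)



definition phi :: "'a::field pt \<Rightarrow> 'a pt \<Rightarrow> 'a pt \<Rightarrow> 'a hpt \<Rightarrow> 'a hpt" where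
  "phi A u w Z = (case Z of (x, y, z) \<Rightarrow>
     (fst A * z + fst u * x + fst w * y, snd A * z + snd u * x + snd w * y, z))"

definition ctrans :: "'a::field pt \<Rightarrow> 'a pt \<Rightarrow> 'a pt \<Rightarrow> 'a conic \<Rightarrow> 'a conic" where
  "ctrans A u w R = (case R of (a, b, c, d, e, f) \<Rightarrow>
     (a * fst u ^ 2 + b * snd u ^ 2 + d * fst u * snd u,
      a * fst w ^ 2 + b * snd w ^ 2 + d * fst w * snd w,
      a * fst A ^ 2 + b * snd A ^ 2 + c + d * fst A * snd A + e * fst A + f * snd A,
      2 * a * fst u * fst w + 2 * b * snd u * snd w + d * (fst u * snd w + snd u * fst w),
      2 * a * fst u * fst A + 2 * b * snd u * snd A + d * (fst u * snd A + snd u * fst A) + e * fst u + f * snd u,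
      2 * a * fst w * fst A + 2 * b * snd w * snd A + d * (fst w * snd A + snd w * fst A) + e * fst w + f * snd w))"

lemma qf_ctrans0:
  "qf (ctrans (a1, a2) (u1, u2) (w1, w2) (a, b, c, d, e, f)) (x, y, z) =
   qf (a, b, c, d, e, f) (phi (a1, a2) (u1, u2) (w1, w2) (x, y, z))"
  unfolding ctrans_def phi_def qf_def by simp algebra

lemma qf_ctrans: "qf (ctrans A u w R) Z = qf R (phi A u w Z)"
proof -
  obtain a1 a2 where A: "A = (a1, a2)" by (cases A)
  obtain u1 u2 where u: "u = (u1, u2)" by (cases u)
  obtain w1 w2 where w: "w = (w1, w2)" by (cases w)
  obtain a b c d e f where R: "R = (a, b, c, d, e, f)" by (cases R)
  obtain x y z where Z: "Z = (x, y, z)" by (cases Z)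
  show ?thesis unfolding A u w R Z by (rule qf_ctrans0)
qed

lemma phi_surj:
  assumes "crs u w \<noteq> 0"
  shows "\<exists>Z. phi A u w Z = Y"
proof -
  obtain y1 y2 y3 where Y: "Y = (y1, y2, y3)" by (cases Y)
  let ?r = "(y1 - fst A * y3, y2 - snd A * y3)"
  let ?Z = "(crs ?r w / crs u w, crs u ?r / crs u w, y3)"
  have k1: "fst u * crs ?r w + fst w * crs u ?r = (y1 - fst A * y3) * crs u w"
    unfolding crs_def by simp algebra
  have k2: "snd u * crs ?r w + snd w * crs u ?r = (y2 - snd A * y3) * crs u w"
    unfolding crs_def by simp algebra
  have c1: "fst u * (crs ?r w / crs u w) + fst w * (crs u ?r / crs u w) = y1 - fst A * y3"
    using k1 assms by (simp add: field_simps)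
  have c2: "snd u * (crs ?r w / crs u w) + snd w * (crs u ?r / crs u w) = y2 - snd A * y3"
    using k2 assms by (simp add: field_simps)
  have "phi A u w ?Z = Y"
    unfolding Y phi_def using c1 c2 by (simp add: algebra_simps)
  then show ?thesis by blast
qed

lemma qf_ext:
  assumes "\<And>Z. qf R1 Z = qf R2 Z"
  shows "R1 = R2"
proof -
  obtain a b c d e f where R1: "R1 = (a, b, c, d, e, f)" by (cases R1)
  obtain a' b' c' d' e' f' where R2: "R2 = (a', b', c', d', e', f')" by (cases R2)
  have 1: "a = a'" using assms[of "(1,0,0)"] by (simp add: R1 R2 qf_def)
  have 2: "b = b'" using assms[of "(0,1,0)"] by (simp add: R1 R2 qf_def)
  have 3: "c = c'" using assms[of "(0,0,1)"] by (simp add: R1 R2 qf_def)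
  have 4: "d = d'" using assms[of "(1,1,0)"] 1 2 by (simp add: R1 R2 qf_def)
  have 5: "e = e'" using assms[of "(1,0,1)"] 1 3 by (simp add: R1 R2 qf_def)
  have 6: "f = f'" using assms[of "(0,1,1)"] 2 3 by (simp add: R1 R2 qf_def)
  show ?thesis using 1 2 3 4 5 6 R1 R2 by simp
qed

definition Vn :: "'a::field \<Rightarrow> 'a \<Rightarrow> 'a conic" where
  "Vn p q = (-4 - 2 * (-(1 + 2*p - q) / p), -4 - 2 * (-(1 + 2*q - p) / q), 1, 4,
             -(1 + 2*p - q) / p, -(1 + 2*q - p) / q)"

lemma norm_uniq:
  fixes p q :: "'a::field"
  assumes two: "(2::'a) \<noteq> 0" and p: "p \<noteq> 0" and q: "q \<noteq> 0"
    and h1: "qf R (1, 0, 2) = 0" and h2: "qf R (0, 1, 2) = 0" and h3: "qf R (1, 1, 2) = 0"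
    and h4: "qf R (p, q, 2) = 0" and h5: "qf R (1 + p, q, 2) = 0" and h6: "qf R (p, 1 + q, 2) = 0"
  shows "R = cscale (fst (snd (snd R))) (Vn p q)"
proof -
  obtain a b c d e f where R: "R = (a, b, c, d, e, f)" by (cases R)
  have e1: "a + 4*c + 2*e = 0" using h1 by (simp add: R qf_def power2_eq_square algebra_simps)
  have e2: "b + 4*c + 2*f = 0" using h2 by (simp add: R qf_def power2_eq_square algebra_simps)
  have e3: "a + b + 4*c + d + 2*e + 2*f = 0" using h3 by (simp add: R qf_def power2_eq_square algebra_simps)
  have e4: "a*p*p + b*q*q + 4*c + d*p*q + 2*e*p + 2*f*q = 0"
    using h4 by (simp add: R qf_def power2_eq_square algebra_simps)
  have e5: "a*(1+p)*(1+p) + b*q*q + 4*c + d*(1+p)*q + 2*e*(1+p) + 2*f*q = 0"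
    using h5 by (simp add: R qf_def power2_eq_square algebra_simps)
  have e6: "a*p*p + b*(1+q)*(1+q) + 4*c + d*p*(1+q) + 2*e*p + 2*f*(1+q) = 0"
    using h6 by (simp add: R qf_def power2_eq_square algebra_simps)
  have dd: "d = 4*c" using e1 e2 e3 by algebra
  have "4 * (c + 2*c*p + e*p - c*q) = 0" using e1 e4 e5 dd by algebra
  then have ee0: "c + 2*c*p + e*p - c*q = 0" using four_ne[OF two] mult_eq_0_iff by blast
  have "4 * (c + 2*c*q + f*q - c*p) = 0" using e2 e4 e6 dd by algebra
  then have ff0: "c + 2*c*q + f*q - c*p = 0" using four_ne[OF two] mult_eq_0_iff by blast
  have ee: "e = c * (-(1 + 2*p - q) / p)" using ee0 p by (simp add: field_simps; algebra)
  have ff: "f = c * (-(1 + 2*q - p) / q)" using ff0 q by (simp add: field_simps; algebra)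
  have aa: "a = c * (-4 - 2 * (-(1 + 2*p - q) / p))" using e1 ee by (simp add: algebra_simps; algebra)
  have bb: "b = c * (-4 - 2 * (-(1 + 2*q - p) / q))" using e2 ff by (simp add: algebra_simps; algebra)
  show ?thesis unfolding R Vn_def cscale_def using aa bb dd ee ff by (simp add: algebra_simps)
qed



definition PLt :: "'a::field pt \<times> 'a pt \<times> 'a pt \<times> 'a pt \<Rightarrow> 'a pt set \<times> 'a pt set" where
  "PLt t = (case t of (X, Y, U, W) \<Rightarrow> (line_through X Y, line_through U W))"
definition gd :: "'a::field pt \<Rightarrow> 'a pt \<times> 'a pt \<times> 'a pt \<times> 'a pt \<Rightarrow> bool" where
  "gd v t = (case t of (X, Y, U, W) \<Rightarrow> crs (dif Y X) v \<noteq> 0 \<and> crs (dif W U) v \<noteq> 0)"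
definition Dt :: "'a::field pt \<Rightarrow> 'a pt \<Rightarrow> 'a pt \<times> 'a pt \<times> 'a pt \<times> 'a pt \<Rightarrow> 'a" where
  "Dt M v t = (case t of (X, Y, U, W) \<Rightarrow> Dp M v X Y U W)"
definition sT :: "'a::field pt \<Rightarrow> 'a pt \<Rightarrow> 'a pt \<times> 'a pt \<times> 'a pt \<times> 'a pt \<Rightarrow> 'a" where
  "sT M v t = (case t of (X, Y, U, W) \<Rightarrow>
     - (crs (dif Y X) (dif M X) / crs (dif Y X) v + crs (dif W U) (dif M U) / crs (dif W U) v) / 2)"
definition tok :: "'a pt \<times> 'a pt \<times> 'a pt \<times> 'a pt \<Rightarrow> bool" where
  "tok t = (case t of (X, Y, U, W) \<Rightarrow> X \<noteq> Y \<and> U \<noteq> W)"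

lemma T_good:
  fixes M v :: "'a::field pt"
  assumes "tok t" "(2::'a) \<noteq> 0" "v \<noteq> (0,0)" "gd v t"
  shows "crosses (pl M v) (PLt t)" "mid_of (pl M v) (PLt t) = hom (ptat M v (sT M v t))"
    "Dt (ptat M v (sT M v t)) v t = 0"
proof -
  obtain X Y U W where t: "t = (X, Y, U, W)" by (cases t) auto
  have XY: "X \<noteq> Y" and UW: "U \<noteq> W" using assms(1) by (auto simp: t tok_def)
  have l1: "crs (dif Y X) v \<noteq> 0" and l2: "crs (dif W U) v \<noteq> 0" using assms(4) by (auto simp: t gd_def)
  show "crosses (pl M v) (PLt t)" unfolding t PLt_def using pair_crosses[OF XY UW assms(3)] l1 l2 by simp
  show "mid_of (pl M v) (PLt t) = hom (ptat M v (sT M v t))"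
    unfolding t PLt_def sT_def using pair_good(1)[OF assms(2) XY UW assms(3) l1 l2] by simp
  show "Dt (ptat M v (sT M v t)) v t = 0"
    unfolding t Dt_def sT_def using pair_good(2)[OF assms(2) XY UW assms(3) l1 l2] by simp
qed

lemma T_bad:
  fixes M v :: "'a::field pt"
  assumes "tok t" "v \<noteq> (0,0)" "crosses (pl M v) (PLt t)" "\<not> gd v t"
  shows "snd (snd (mid_of (pl M v) (PLt t))) = 0"
proof -
  obtain X Y U W where t: "t = (X, Y, U, W)" by (cases t) auto
  have XY: "X \<noteq> Y" and UW: "U \<noteq> W" using assms(1) by (auto simp: t tok_def)
  show ?thesis using pair_bad[OF XY UW assms(2)] assms(3,4) by (simp add: t PLt_def gd_def)
qed

lemma T_D0:
  fixes M v :: "'a::field pt"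
  assumes "tok t" "(2::'a) \<noteq> 0" "v \<noteq> (0,0)" "crosses (pl M v) (PLt t)" "Dt M v t = 0"
  shows "mid_of (pl M v) (PLt t) = hom M"
proof -
  obtain X Y U W where t: "t = (X, Y, U, W)" by (cases t) auto
  have XY: "X \<noteq> Y" and UW: "U \<noteq> W" using assms(1) by (auto simp: t tok_def)
  show ?thesis using pair_D0(2)[OF assms(2) XY UW assms(3)] assms(4,5) by (simp add: t PLt_def Dt_def)
qed

lemma proj_eq_hom_hom: "proj_eq (hom a) (hom b) \<Longrightarrow> a = b"
  by (auto simp: proj_eq_def hom_def hscale_def prod_eq_iff)

lemma proj_eq_z0: "snd (snd Z) = 0 \<Longrightarrow> \<not> proj_eq Z (hom b)"
  by (cases Z) (auto simp: proj_eq_def hom_def hscale_def)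

lemma proj_eq_hom_ex: "proj_eq (hom a) X \<Longrightarrow> \<exists>k. k \<noteq> 0 \<and> X = hscale k (hom a)"
  by (auto simp: proj_eq_def)

lemma proj_eq_refl_hom: "proj_eq (hom a) (hom a)"
  unfolding proj_eq_def by (rule conjI, simp add: hom_def, rule exI[of _ 1]) (simp add: hscale_def hom_def)

lemma proj_eq_aff:
  assumes "snd (snd X) \<noteq> 0"
  shows "proj_eq (hom (fst X / snd (snd X), fst (snd X) / snd (snd X))) X"
  unfolding proj_eq_def using assms
  by (intro conjI exI[of _ "snd (snd X)"]) (auto simp: hom_def hscale_def prod_eq_iff)

lemma dif_eq: "crs (dif Y X) (dif Z Y) = crs (dif Y X) (dif Z X)"
  unfolding crs_def dif_def by (simp; algebra)

context
  fixes A B C D :: "'a::field pt"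
  assumes two: "(2::'a) \<noteq> 0" and quad: "quadrangle A B C D"
begin

lemma dst: "A \<noteq> B" "A \<noteq> C" "A \<noteq> D" "B \<noteq> C" "B \<noteq> D" "C \<noteq> D"
  using quad by (auto simp: quadrangle_def)

lemma nABC: "crs (dif B A) (dif C A) \<noteq> 0"
  using ncol[OF dst(1)] quad by (auto simp: quadrangle_def)
lemma nABD: "crs (dif B A) (dif D A) \<noteq> 0"
  using ncol[OF dst(1)] quad by (auto simp: quadrangle_def)
lemma nACD: "crs (dif C A) (dif D A) \<noteq> 0"
  using ncol[OF dst(2)] quad by (auto simp: quadrangle_def)
lemma nBCD: "crs (dif C B) (dif D B) \<noteq> 0"
  using ncol[OF dst(4)] quad by (auto simp: quadrangle_def)

lemma ncs:
  "crs (dif B A) (dif D B) \<noteq> 0" "crs (dif D C) (dif C A) \<noteq> 0" "crs (dif D C) (dif D B) \<noteq> 0"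
  "crs (dif B A) (dif C B) \<noteq> 0" "crs (dif D C) (dif D A) \<noteq> 0" "crs (dif D C) (dif C B) \<noteq> 0"
  "crs (dif C A) (dif C B) \<noteq> 0" "crs (dif D B) (dif D A) \<noteq> 0" "crs (dif D B) (dif C B) \<noteq> 0"
  "crs (dif D C) (dif A C) \<noteq> 0" "crs (dif D B) (dif A B) \<noteq> 0" "crs (dif C B) (dif A B) \<noteq> 0"
proof -
  have e1: "crs (dif B A) (dif D B) = crs (dif B A) (dif D A)" unfolding crs_def dif_def by (simp; algebra)
  have e2: "crs (dif D C) (dif C A) = - crs (dif C A) (dif D A)" unfolding crs_def dif_def by (simp; algebra)
  have e3: "crs (dif D C) (dif D B) = - crs (dif C B) (dif D B)" unfolding crs_def dif_def by (simp; algebra)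
  have e4: "crs (dif B A) (dif C B) = crs (dif B A) (dif C A)" unfolding crs_def dif_def by (simp; algebra)
  have e5: "crs (dif D C) (dif D A) = - crs (dif C A) (dif D A)" unfolding crs_def dif_def by (simp; algebra)
  have e6: "crs (dif D C) (dif C B) = - crs (dif C B) (dif D B)" unfolding crs_def dif_def by (simp; algebra)
  have e7: "crs (dif C A) (dif C B) = crs (dif B A) (dif C A)" unfolding crs_def dif_def by (simp; algebra)
  have e8: "crs (dif D B) (dif D A) = - crs (dif B A) (dif D A)" unfolding crs_def dif_def by (simp; algebra)
  have e9: "crs (dif D B) (dif C B) = - crs (dif C B) (dif D B)" unfolding crs_def dif_def by (simp; algebra)
  have e10: "crs (dif D C) (dif A C) = crs (dif C A) (dif D A)" unfolding crs_def dif_def by (simp; algebra)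
  have e11: "crs (dif D B) (dif A B) = crs (dif B A) (dif D A)" unfolding crs_def dif_def by (simp; algebra)
  have e12: "crs (dif C B) (dif A B) = crs (dif B A) (dif C A)" unfolding crs_def dif_def by (simp; algebra)
  show "crs (dif B A) (dif D B) \<noteq> 0" "crs (dif D C) (dif C A) \<noteq> 0" "crs (dif D C) (dif D B) \<noteq> 0"
    "crs (dif B A) (dif C B) \<noteq> 0" "crs (dif D C) (dif D A) \<noteq> 0" "crs (dif D C) (dif C B) \<noteq> 0"
    "crs (dif C A) (dif C B) \<noteq> 0" "crs (dif D B) (dif D A) \<noteq> 0" "crs (dif D B) (dif C B) \<noteq> 0"
    "crs (dif D C) (dif A C) \<noteq> 0" "crs (dif D B) (dif A B) \<noteq> 0" "crs (dif C B) (dif A B) \<noteq> 0"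
    unfolding e1 e2 e3 e4 e5 e6 e7 e8 e9 e10 e11 e12 using nABC nABD nACD nBCD by simp_all
qed

lemma cr0':
  fixes a b v :: "'a pt"
  assumes "crs a b \<noteq> 0" "v \<noteq> (0,0)"
  shows "crs a v \<noteq> 0 \<or> crs b v \<noteq> 0"
  using cr0[OF _ _ assms(2), of a b] assms(1) by blast

lemma goods:
  assumes v: "v \<noteq> (0,0)"
  shows "gd v (A,B,C,D) \<or> gd v (A,C,B,D)" "gd v (A,B,C,D) \<or> gd v (A,D,B,C)" "gd v (A,C,B,D) \<or> gd v (A,D,B,C)"
proof -
  note c = cr0'[OF _ v]
  show "gd v (A,B,C,D) \<or> gd v (A,C,B,D)"
    unfolding gd_def using c[OF nABC] c[OF ncs(1)] c[OF ncs(2)] c[OF ncs(3)] by auto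
  show "gd v (A,B,C,D) \<or> gd v (A,D,B,C)"
    unfolding gd_def using c[OF nABD] c[OF ncs(4)] c[OF ncs(5)] c[OF ncs(6)] by auto
  show "gd v (A,C,B,D) \<or> gd v (A,D,B,C)"
    unfolding gd_def using c[OF nACD] c[OF ncs(7)] c[OF ncs(8)] c[OF ncs(9)] by auto
qed

definition "Ts = {(A,B,C,D), (A,C,B,D), (A,D,B,C)}"

lemma opp_Ts: "opp_pairs A B C D = PLt ` Ts"
  by (simp add: opp_pairs_def Ts_def PLt_def)

lemma tok_Ts: "t \<in> Ts \<Longrightarrow> tok t"
  using dst by (auto simp: Ts_def tok_def)

lemma Ts_dist: "(A,B,C,D) \<noteq> (A,C,B,D)" "(A,B,C,D) \<noteq> (A,D,B,C)" "(A,C,B,D) \<noteq> (A,D,B,C)"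
  using dst by auto

lemma twogood:
  assumes v: "v \<noteq> (0,0)" and t: "t \<in> Ts"
  shows "\<exists>t'\<in>Ts. t' \<noteq> t \<and> gd v t'"
  using t goods[OF v] Ts_dist unfolding Ts_def by auto

lemma plT:
  assumes "t \<in> Ts" "t' \<in> Ts" "t \<noteq> t'" "Dt M v t = 0" "Dt M v t' = 0"
  shows "Dp M v A B C D = 0 \<and> Dp M v A C B D = 0"
  using assms plucker[of M v A B C D] unfolding Ts_def Dt_def by auto

lemma forward:
  assumes X: "X \<in> bisector_locus A B C D"
  shows "qf (QQ A B C D) X = 0 \<and> snd (snd X) \<noteq> 0"
proof -
  obtain l P where bis: "bisects A B C D l" and P: "P \<in> opp_pairs A B C D" and cr: "crosses l P"
    and pe: "proj_eq (mid_of l P) X"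
    using X unfolding bisector_locus_def by blast
  have "is_line l" using bis unfolding bisects_def by blast
  then obtain M0 v where v: "v \<noteq> (0,0)" and l: "l = pl M0 v" using is_line_ex by blast
  obtain t where t: "t \<in> Ts" and Pt: "P = PLt t" using P opp_Ts by auto
  have bis2: "\<And>s s'. s \<in> Ts \<Longrightarrow> s' \<in> Ts \<Longrightarrow> crosses l (PLt s) \<Longrightarrow> crosses l (PLt s') \<Longrightarrow>
      proj_eq (mid_of l (PLt s)) (mid_of l (PLt s'))"
    using bis unfolding bisects_def opp_Ts by blast
  obtain t' where t': "t' \<in> Ts" "t' \<noteq> t" "gd v t'" using twogood[OF v t] by blast
  note G' = T_good[OF tok_Ts[OF t'(1)] two v t'(3), of M0]
  have gt: "gd v t"
  proof (rule ccontr)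
    assume ng: "\<not> gd v t"
    have z: "snd (snd (mid_of l (PLt t))) = 0"
      using T_bad[OF tok_Ts[OF t] v _ ng] cr unfolding l Pt by blast
    have "proj_eq (mid_of l (PLt t)) (mid_of l (PLt t'))"
      using bis2[OF t t'(1)] cr G'(1) unfolding l Pt by blast
    then show False using proj_eq_z0[OF z] G'(2) unfolding l by simp
  qed
  note G = T_good[OF tok_Ts[OF t] two v gt, of M0]
  define M where "M = ptat M0 v (sT M0 v t)"
  have "proj_eq (mid_of l (PLt t)) (mid_of l (PLt t'))"
    using bis2[OF t t'(1)] G(1) G'(1) unfolding l by blast
  then have "proj_eq (hom M) (hom (ptat M0 v (sT M0 v t')))"
    using G(2) G'(2) unfolding l M_def by simp
  then have MM: "ptat M0 v (sT M0 v t') = M" using proj_eq_hom_hom by metis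
  have D1: "Dt M v t = 0" using G(3) unfolding M_def .
  have D2: "Dt M v t' = 0" using G'(3) MM by simp
  have DD: "Dp M v A B C D = 0 \<and> Dp M v A C B D = 0" using plT[OF t t'(1) _ D1 D2] t'(2) by metis
  have q0: "qf (QQ A B C D) (hom M) = 0"
    unfolding QQ_G by (rule dot0[OF _ _ v]) (use DD in \<open>simp_all add: Dp_Gh\<close>)
  have "proj_eq (hom M) X" using pe G(2) unfolding Pt l M_def by simp
  then obtain k where k: "k \<noteq> 0" "X = hscale k (hom M)" using proj_eq_hom_ex by blast
  have "qf (QQ A B C D) X = k^2 * qf (QQ A B C D) (hom M)" unfolding k(2) by (rule qf_hscale)
  moreover have "snd (snd X) = k" unfolding k(2) by (simp add: hscale_def hom_def)
  ultimately show ?thesis using k(1) q0 by simp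
qed

lemma backward:
  assumes q: "qf (QQ A B C D) X = 0" and z: "snd (snd X) \<noteq> 0"
  shows "X \<in> bisector_locus A B C D"
proof -
  define M where "M = (fst X / snd (snd X), fst (snd X) / snd (snd X))"
  have pe: "proj_eq (hom M) X" unfolding M_def by (rule proj_eq_aff[OF z])
  then obtain k where k: "k \<noteq> 0" "X = hscale k (hom M)" using proj_eq_hom_ex by blast
  have "qf (QQ A B C D) (hom M) = 0" using q k by (simp add: qf_hscale)
  then have "crs (Gh (hom M) A B C D) (Gh (hom M) A C B D) = 0" by (simp add: QQ_G)
  then obtain v where v: "v \<noteq> (0,0)"
    and g1: "fst (Gh (hom M) A B C D) * fst v + snd (Gh (hom M) A B C D) * snd v = 0"
    and g2: "fst (Gh (hom M) A C B D) * fst v + snd (Gh (hom M) A C B D) * snd v = 0"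
    using crs0_dot by blast
  have d1: "Dp M v A B C D = 0" using g1 by (simp add: Dp_Gh)
  have d2: "Dp M v A C B D = 0" using g2 by (simp add: Dp_Gh)
  have d3: "Dp M v A D B C = 0" using plucker[of M v A B C D] d1 d2 by simp
  have Dall: "\<And>s. s \<in> Ts \<Longrightarrow> Dt M v s = 0" using d1 d2 d3 by (auto simp: Ts_def Dt_def)
  have mids: "\<And>s. s \<in> Ts \<Longrightarrow> crosses (pl M v) (PLt s) \<Longrightarrow> mid_of (pl M v) (PLt s) = hom M"
    using T_D0[OF tok_Ts two v _ Dall] by blast
  have bis: "bisects A B C D (pl M v)"
    unfolding bisects_def opp_Ts
  proof (intro conjI ballI impI)
    show "is_line (pl M v)" using is_line_pl[OF v] .
    fix P P' assume P: "P \<in> PLt ` Ts" and P': "P' \<in> PLt ` Ts"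
      and c: "crosses (pl M v) P \<and> crosses (pl M v) P'"
    obtain s where s: "s \<in> Ts" "P = PLt s" using P by blast
    obtain s' where s': "s' \<in> Ts" "P' = PLt s'" using P' by blast
    have "mid_of (pl M v) P = hom M" using mids[OF s(1)] c s(2) by blast
    moreover have "mid_of (pl M v) P' = hom M" using mids[OF s'(1)] c s'(2) by blast
    ultimately show "proj_eq (mid_of (pl M v) P) (mid_of (pl M v) P')" using proj_eq_refl_hom by simp
  qed
  have "gd v (A,B,C,D) \<or> gd v (A,C,B,D)" using goods(1)[OF v] .
  then obtain t where t: "t \<in> Ts" "gd v t" unfolding Ts_def by blast
  have cr: "crosses (pl M v) (PLt t)" using T_good(1)[OF tok_Ts[OF t(1)] two v t(2)] .
  have "proj_eq (mid_of (pl M v) (PLt t)) X" using mids[OF t(1) cr] pe by simp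
  moreover have "PLt t \<in> opp_pairs A B C D" using t(1) opp_Ts by simp
  ultimately show ?thesis unfolding bisector_locus_def using bis cr by blast
qed


lemma QQ_ne: "QQ A B C D \<noteq> (0,0,0,0,0,0)"
proof
  assume h: "QQ A B C D = (0,0,0,0,0,0)"
  have "qf (QQ A B C D) (hom A) \<noteq> 0" unfolding QQ_A using nABC ncs(10) ncs(11) by simp
  then show False unfolding h by (simp add: qf_def hom_def)
qed

lemma QQ_passes: "passes_through (QQ A B C D) (diagonal_points A B C D \<union> midpoints A B C D)"
proof -
  note d1 = diag[OF dst(1) dst(6) ncs(10)]
  note d2 = diag[OF dst(2) dst(5) ncs(11)]
  note d3 = diag[OF dst(3) dst(4) ncs(12)]
  have "qf (QQ A B C D) (meet (line_through A B) (line_through C D)) = 0"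
    using d1 QQ_diag1 by blast
  moreover have "qf (QQ A B C D) (meet (line_through A C) (line_through B D)) = 0"
    using d2 QQ_diag2 by blast
  moreover have "qf (QQ A B C D) (meet (line_through A D) (line_through B C)) = 0"
    using d3 QQ_diag3 by blast
  ultimately show ?thesis
    unfolding passes_through_def diagonal_points_def opp_pairs_def midpoints_def
    using QQ_mids[OF two, of A B C D] by auto
qed

definition "uu = dif B A"
definition "ww = dif C A"
definition "pp = crs (dif D A) ww / crs uu ww"
definition "qq = crs uu (dif D A) / crs uu ww"

lemma det_ne: "crs uu ww \<noteq> 0" using nABC by (simp add: uu_def ww_def)

lemma pp_ne: "pp \<noteq> 0"
proof -
  have "crs (dif D A) ww = - crs (dif C A) (dif D A)" unfolding ww_def crs_def by simp
  then show ?thesis using nACD det_ne by (simp add: pp_def)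
qed

lemma qq_ne: "qq \<noteq> 0"
  using nABD det_ne by (simp add: qq_def uu_def)

lemma Dform: "D = (fst A + pp * fst uu + qq * fst ww, snd A + pp * snd uu + qq * snd ww)"
proof -
  have k1: "fst uu * crs (dif D A) ww + fst ww * crs uu (dif D A) = (fst D - fst A) * crs uu ww"
    unfolding crs_def dif_def by (simp; algebra)
  have k2: "snd uu * crs (dif D A) ww + snd ww * crs uu (dif D A) = (snd D - snd A) * crs uu ww"
    unfolding crs_def dif_def by (simp; algebra)
  have "pp * fst uu + qq * fst ww = fst D - fst A"
    using k1 det_ne unfolding pp_def qq_def by (simp add: field_simps)
  moreover have "pp * snd uu + qq * snd ww = snd D - snd A"
    using k2 det_ne unfolding pp_def qq_def by (simp add: field_simps)
  ultimately show ?thesis by (simp add: prod_eq_iff algebra_simps)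
qed

lemma phi_mids:
  "phi A uu ww (1, 0, 2) = hscale 2 (hom (midpt A B))"
  "phi A uu ww (0, 1, 2) = hscale 2 (hom (midpt A C))"
  "phi A uu ww (1, 1, 2) = hscale 2 (hom (midpt B C))"
  "phi A uu ww (pp, qq, 2) = hscale 2 (hom (midpt A D))"
  "phi A uu ww (1 + pp, qq, 2) = hscale 2 (hom (midpt B D))"
  "phi A uu ww (pp, 1 + qq, 2) = hscale 2 (hom (midpt C D))"
proof -
  note t = two
  show "phi A uu ww (1, 0, 2) = hscale 2 (hom (midpt A B))"
    using t by (simp add: phi_def hscale_def hom_def midpt_def uu_def ww_def dif_def algebra_simps)
  show "phi A uu ww (0, 1, 2) = hscale 2 (hom (midpt A C))"
    using t by (simp add: phi_def hscale_def hom_def midpt_def uu_def ww_def dif_def algebra_simps)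
  show "phi A uu ww (1, 1, 2) = hscale 2 (hom (midpt B C))"
    using t by (simp add: phi_def hscale_def hom_def midpt_def uu_def ww_def dif_def algebra_simps)
  show "phi A uu ww (pp, qq, 2) = hscale 2 (hom (midpt A D))"
    using t by (subst (2) Dform) (simp add: phi_def hscale_def hom_def midpt_def algebra_simps)
  show "phi A uu ww (1 + pp, qq, 2) = hscale 2 (hom (midpt B D))"
    using t by (subst (2) Dform) (simp add: phi_def hscale_def hom_def midpt_def uu_def dif_def algebra_simps)
  show "phi A uu ww (pp, 1 + qq, 2) = hscale 2 (hom (midpt C D))"
    using t by (subst (2) Dform) (simp add: phi_def hscale_def hom_def midpt_def ww_def dif_def algebra_simps)
qed

lemma ctrans_Vn:
  assumes "passes_through R (midpoints A B C D)"
  shows "ctrans A uu ww R = cscale (fst (snd (snd (ctrans A uu ww R)))) (Vn pp qq)"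
proof (rule norm_uniq[OF two pp_ne qq_ne])
  have z: "qf R (hom (midpt A B)) = 0" "qf R (hom (midpt A C)) = 0" "qf R (hom (midpt B C)) = 0"
    "qf R (hom (midpt A D)) = 0" "qf R (hom (midpt B D)) = 0" "qf R (hom (midpt C D)) = 0"
    using assms unfolding passes_through_def midpoints_def by auto
  show "qf (ctrans A uu ww R) (1, 0, 2) = 0" "qf (ctrans A uu ww R) (0, 1, 2) = 0"
    "qf (ctrans A uu ww R) (1, 1, 2) = 0" "qf (ctrans A uu ww R) (pp, qq, 2) = 0"
    "qf (ctrans A uu ww R) (1 + pp, qq, 2) = 0" "qf (ctrans A uu ww R) (pp, 1 + qq, 2) = 0"
    unfolding qf_ctrans phi_mids qf_hscale using z by simp_all
qed

lemma QQ_unique: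
  assumes "passes_through Q' (diagonal_points A B C D \<union> midpoints A B C D)"
  shows "\<exists>k. Q' = cscale k (QQ A B C D)"
proof -
  have p1: "passes_through Q' (midpoints A B C D)" using assms by (simp add: passes_through_def)
  have p2: "passes_through (QQ A B C D) (midpoints A B C D)" using QQ_passes by (simp add: passes_through_def)
  define c' where "c' = fst (snd (snd (ctrans A uu ww Q')))"
  define c where "c = fst (snd (snd (ctrans A uu ww (QQ A B C D))))"
  have E1: "ctrans A uu ww Q' = cscale c' (Vn pp qq)" using ctrans_Vn[OF p1] c'_def by simp
  have E2: "ctrans A uu ww (QQ A B C D) = cscale c (Vn pp qq)" using ctrans_Vn[OF p2] c_def by simp
  have cne: "c \<noteq> 0"
  proof
    assume "c = 0"
    then have "qf (ctrans A uu ww (QQ A B C D)) (0, 0, 1) = 0" using E2 by (simp add: qf_cscale)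
    moreover have "phi A uu ww (0, 0, 1) = hom A" by (simp add: phi_def hom_def)
    ultimately have "qf (QQ A B C D) (hom A) = 0" by (simp add: qf_ctrans)
    moreover have "qf (QQ A B C D) (hom A) \<noteq> 0" unfolding QQ_A using nABC ncs(10) ncs(11) by simp
    ultimately show False by simp
  qed
  have "\<And>Y. qf Q' Y = qf (cscale (c' / c) (QQ A B C D)) Y"
  proof -
    fix Y
    obtain Z where Z: "phi A uu ww Z = Y" using phi_surj[OF det_ne] by blast
    have "qf Q' Y = qf (ctrans A uu ww Q') Z" using Z by (simp add: qf_ctrans)
    also have "\<dots> = c' * qf (Vn pp qq) Z" by (simp add: E1 qf_cscale)
    also have "\<dots> = (c' / c) * (c * qf (Vn pp qq) Z)" using cne by simp
    also have "c * qf (Vn pp qq) Z = qf (QQ A B C D) Y"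
      using Z E2 by (metis qf_cscale qf_ctrans)
    finally show "qf Q' Y = qf (cscale (c' / c) (QQ A B C D)) Y" by (simp add: qf_cscale)
  qed
  then have "Q' = cscale (c' / c) (QQ A B C D)" by (rule qf_ext)
  then show ?thesis by blast
qed

end


theorem corollary5p3:
  fixes A B C D :: "'a::field pt"
  assumes char: "(2::'a) \<noteq> 0"
    and quad: "quadrangle A B C D"
  shows "\<exists>Q. is_nine_point_conic A B C D Q \<and>
             bisector_locus A B C D = {X. qf Q X = 0 \<and> snd (snd X) \<noteq> 0}"
proof -
  have "is_nine_point_conic A B C D (QQ A B C D)"
    unfolding is_nine_point_conic_def
    using QQ_ne[OF char quad] QQ_passes[OF char quad] QQ_unique[OF char quad] by blast
  moreover have "bisector_locus A B C D = {X. qf (QQ A B C D) X = 0 \<and> snd (snd X) \<noteq> 0}"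
    using forward[OF char quad] backward[OF char quad] by blast
  ultimately show ?thesis by blast
qed

end
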